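(* Let $r\in\mathbb{C}$ and let $m,n$ be positive integers. Then $$\sum_{k=0}^n(-1)^k\binom{r-1}{k}\sum_{j=m}^{k+1}\binom{k}{j-1}\frac{s(j,m)}{j!}=(-1)^n\binom{r-1}{n}\frac{1}{m!}H_{n+1}(m)-\frac{1}{m!}\sum_{k=0}^n(-1)^k\binom{r}{k}H_k(m).$$ In particular, $\sum_{k=0}^n\frac{(-1)^k}{k+1}\binom{r-1}{k}=(-1)^n\binom{r-1}{n}H_{n+1}-\sum_{k=0}^n(-1)^k\binom{r}{k}H_k$.
   Context: For integers $m\ge 1$, $n\ge 0$, the multiple harmonic-like numbers are $H_n(m)=\sum_{1\le k_1+k_2+\cdots+k_m\le n}\frac{1}{k_1k_2\cdots k_m}$ (sum over positive integers $k_1,\dots,k_m$), with $H_n(0)=1$ for $n\ge 0$ and $H_0(m)=0$ for $m\ge1$. $H_n=H_n(1)=\sum_{k=1}^n\frac1k$. The (signed) Stirling numbers of the first kind $s(n,k)$ are defined by $\sum_{n\ge k}s(n,k)\frac{z^n}{n!}=\frac{\ln^k(1+z)}{k!}$, with $s(n,k)=0$ for $n<k$. For complex $x$, $\binom{x}{k}=\frac{x(x-1)\cdots(x-k+1)}{k!}$. *)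

theory Defs
  imports Complex_Main "HOL-Combinatorics.Stirling"
begin

definition stirling1s :: "nat \<Rightarrow> nat \<Rightarrow> int" where
  "stirling1s n k = (-1) ^ (n - k) * int (stirling n k)"

text \<open>For m = 0 the only tuple is the empty one, giving 1; for n = 0, m \<ge> 1 the sum is empty.\<close>
definition multiH :: "nat \<Rightarrow> nat \<Rightarrow> 'a::field" where
  "multiH n m = (\<Sum>ks \<in> {ks. length ks = m \<and> (\<forall>k\<in>set ks. 0 < k) \<and> sum_list ks \<le> n}.
                   1 / of_nat (prod_list ks))"

end

theory Submission
  imports Defs "HOL-Computational_Algebra.Formal_Power_Series"
begin


lemma stir_sum_rec:
  "(of_nat (stirling (Suc N) (Suc m)) :: complex) / fact N = (\<Sum>i\<le>N. of_nat (stirling i m) / fact i)"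
proof (induction N)
  case 0
  then show ?case by simp
next
  case (Suc N)
  have rec: "stirling (Suc (Suc N)) (Suc m) = Suc N * stirling (Suc N) (Suc m) + stirling (Suc N) m"
    by (rule stirling.simps(4))
  have gen: "(of_nat (Suc N) * a + b) / fact (Suc N) = a / fact N + b / (fact (Suc N) :: complex)" for a b
  proof -
    have "(of_nat (Suc N) * a + b) / fact (Suc N) = of_nat (Suc N) * a / fact (Suc N) + b / (fact (Suc N) :: complex)"
      by (rule add_divide_distrib)
    moreover have "of_nat (Suc N) * a / fact (Suc N) = a / (fact N :: complex)"
      unfolding fact_Suc by (simp del: of_nat_Suc)
    ultimately show ?thesis by simp
  qed
  have "(of_nat (stirling (Suc (Suc N)) (Suc m)) :: complex) / fact (Suc N)
     = of_nat (stirling (Suc N) (Suc m)) / fact N + of_nat (stirling (Suc N) m) / fact (Suc N)"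
    unfolding rec of_nat_add of_nat_mult by (rule gen)
  then show ?case using Suc by simp
qed

lemma gchoose_stir:
  assumes "j \<le> K"
  shows "(x::complex) gchoose j = (\<Sum>i\<le>K. of_int (stirling1s j i) * x^i) / fact j"
proof -
  have "x gchoose j = (-1)^j * pochhammer (-x) j / fact j" by (rule gbinomial_pochhammer)
  also have "pochhammer (-x) j = (\<Sum>i\<le>j. of_nat (stirling j i) * (-x)^i)"
    by (rule stirling_pochhammer[symmetric])
  also have "(-1)^j * (\<Sum>i\<le>j. of_nat (stirling j i) * (-x)^i) = (\<Sum>i\<le>j. of_int (stirling1s j i) * x^i)"
    unfolding sum_distrib_left
  proof (rule sum.cong[OF refl])
    fix i assume "i \<in> {..j}"
    then have ij: "i \<le> j" by simp
    have "(-1::complex)^j = (-1)^(j-i) * (-1)^i" using ij by (simp flip: power_add)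
    moreover have "(-x)^i = (-1)^i * x^i" by (rule power_minus)
    moreover have "(-1::complex)^i * (-1)^i = 1" by (simp flip: power_mult_distrib)
    ultimately have "(-1::complex)^j * (-x)^i = (-1)^(j-i) * x^i"
      by (metis (no_types, lifting) mult.assoc mult.commute mult.left_neutral)
    then show "(-1)^j * (of_nat (stirling j i) * (-x)^i) = of_int (stirling1s j i) * x^i"
      unfolding stirling1s_def by (simp add: algebra_simps)
  qed
  also have "(\<Sum>i\<le>j. of_int (stirling1s j i) * x^i) = (\<Sum>i\<le>K. of_int (stirling1s j i) * x^i)"
    by (rule sum.mono_neutral_left) (use assms in \<open>auto simp: stirling1s_def\<close>)
  finally show ?thesis by simp
qed

lemma poch_expand:
  "pochhammer (x::complex) (Suc M) / fact (Suc M) = (\<Sum>j=1..Suc M. of_nat (M choose (j-1)) * (x gchoose j))"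
proof -
  have "(x + of_nat M) gchoose (Suc M) = pochhammer x (Suc M) / fact (Suc M)"
    using gbinomial_pochhammer'[of "x + of_nat M" "Suc M"] by simp
  moreover have "(x + of_nat M) gchoose (Suc M) = (\<Sum>j=0..Suc M. (x gchoose j) * (of_nat M gchoose (Suc M - j)))"
    by (rule gbinomial_Vandermonde[symmetric])
  moreover have "(\<Sum>j=0..Suc M. (x gchoose j) * (of_nat M gchoose (Suc M - j)))
      = (\<Sum>j=1..Suc M. (x gchoose j) * (of_nat M gchoose (Suc M - j)))"
  proof -
    have "{0..Suc M} = insert 0 {1..Suc M}" by auto
    moreover have "(of_nat M gchoose (Suc M - 0) :: complex) = 0"
      by (simp flip: binomial_gbinomial)
    ultimately show ?thesis by simp
  qed
  moreover have "(\<Sum>j=1..Suc M. (x gchoose j) * (of_nat M gchoose (Suc M - j)))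
      = (\<Sum>j=1..Suc M. of_nat (M choose (j-1)) * (x gchoose j))"
  proof (rule sum.cong[OF refl])
    fix j assume "j \<in> {1..Suc M}"
    then have j: "1 \<le> j" "j \<le> Suc M" by auto
    have "M choose (Suc M - j) = M choose (j - 1)"
      using binomial_symmetric[of "j - 1" M] j by (simp add: Suc_diff_le)
    then show "(x gchoose j) * (of_nat M gchoose (Suc M - j)) = of_nat (M choose (j-1)) * (x gchoose j)"
      by (simp flip: binomial_gbinomial)
  qed
  ultimately show ?thesis by simp
qed

lemma stir_coeff:
  assumes "i \<le> Suc M"
  shows "(of_nat (stirling (Suc M) i) :: complex) / fact (Suc M)
       = (\<Sum>j=1..Suc M. of_nat (M choose (j-1)) * of_int (stirling1s j i) / fact j)"
proof -
  let ?c = "\<lambda>i. (of_nat (stirling (Suc M) i) :: complex) / fact (Suc M)"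
  let ?d = "\<lambda>i. (\<Sum>j=1..Suc M. of_nat (M choose (j-1)) * of_int (stirling1s j i) / (fact j :: complex))"
  have "\<forall>x. (\<Sum>i\<le>Suc M. ?c i * x^i) = (\<Sum>i\<le>Suc M. ?d i * x^i)"
  proof
    fix x :: complex
    have "(\<Sum>i\<le>Suc M. ?c i * x^i) = pochhammer x (Suc M) / fact (Suc M)"
      by (simp only: stirling_pochhammer[symmetric] sum_divide_distrib times_divide_eq_left)
    also have "\<dots> = (\<Sum>j=1..Suc M. of_nat (M choose (j-1)) * (x gchoose j))"
      by (rule poch_expand)
    also have "\<dots> = (\<Sum>j=1..Suc M. \<Sum>i\<le>Suc M. of_nat (M choose (j-1)) * of_int (stirling1s j i) / fact j * x^i)"
    proof (rule sum.cong[OF refl])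
      fix j assume "j \<in> {1..Suc M}"
      then have "j \<le> Suc M" by simp
      show "of_nat (M choose (j-1)) * (x gchoose j) = (\<Sum>i\<le>Suc M. of_nat (M choose (j-1)) * of_int (stirling1s j i) / fact j * x^i)"
        unfolding gchoose_stir[OF \<open>j \<le> Suc M\<close>, of x] sum_divide_distrib sum_distrib_left
        by (rule sum.cong[OF refl]) simp
    qed
    also have "\<dots> = (\<Sum>i\<le>Suc M. ?d i * x^i)"
      by (subst sum.swap) (simp only: sum_distrib_right)
    finally show "(\<Sum>i\<le>Suc M. ?c i * x^i) = (\<Sum>i\<le>Suc M. ?d i * x^i)" .
  qed
  then have "\<forall>i\<le>Suc M. ?c i = ?d i" by (rule polyfun_eq_coeffs[THEN iffD1])
  then show ?thesis using assms by simp
qed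



definition TT :: "nat \<Rightarrow> nat \<Rightarrow> nat list set" where
  "TT N m = {ks. length ks = m \<and> (\<forall>k\<in>set ks. 0 < k) \<and> sum_list ks = N}"

definition uu :: "nat \<Rightarrow> nat \<Rightarrow> complex" where
  "uu N m = (\<Sum>ks\<in>TT N m. 1 / of_nat (prod_list ks))"

lemma finite_bounded_lists:
  "finite {ks::nat list. length ks = m \<and> (\<forall>k\<in>set ks. 0 < k) \<and> sum_list ks \<le> n}"
proof -
  have "{ks::nat list. length ks = m \<and> (\<forall>k\<in>set ks. 0 < k) \<and> sum_list ks \<le> n}
        \<subseteq> {ks. set ks \<subseteq> {..n} \<and> length ks = m}"
    using member_le_sum_list by fastforce
  moreover have "finite {ks. set ks \<subseteq> {..n::nat} \<and> length ks = m}"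
    by (rule finite_lists_length_eq) simp
  ultimately show ?thesis by (rule finite_subset)
qed

lemma finite_TT: "finite (TT N m)"
  by (rule finite_subset[OF _ finite_bounded_lists[of m N]]) (auto simp: TT_def)

lemma multiH_uu: "(multiH n m :: complex) = (\<Sum>N\<le>n. uu N m)"
proof -
  have eq: "{ks::nat list. length ks = m \<and> (\<forall>k\<in>set ks. 0 < k) \<and> sum_list ks \<le> n} = (\<Union>N\<in>{..n}. TT N m)"
    by (auto simp: TT_def)
  have "(\<Sum>ks\<in>(\<Union>N\<in>{..n}. TT N m). 1 / (of_nat (prod_list ks) :: complex)) = (\<Sum>N\<le>n. uu N m)"
    unfolding uu_def
    apply (rule sum.UNION_disjoint)
      apply simp
     apply (simp add: finite_TT)
    apply (auto simp: TT_def)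
    done
  then show ?thesis unfolding multiH_def eq .
qed

lemma uu_0: "uu N 0 = (if N = 0 then 1 else 0)"
proof -
  have "TT N 0 = (if N = 0 then {[]} else {})" by (auto simp: TT_def)
  then show ?thesis by (simp add: uu_def)
qed

lemma uu_Suc_0: "uu 0 (Suc m) = 0"
proof -
  have "TT 0 (Suc m) = {}"
  proof (rule ccontr)
    assume "TT 0 (Suc m) \<noteq> {}"
    then obtain ks where "ks \<in> TT 0 (Suc m)" by blast
    then have ks: "length ks = Suc m" "\<forall>k\<in>set ks. 0 < k" "sum_list ks = 0"
      by (simp_all add: TT_def)
    then obtain k ks' where "ks = k # ks'" by (cases ks) auto
    with ks show False by auto
  qed
  then show ?thesis by (simp add: uu_def)
qed

definition del :: "nat \<Rightarrow> nat list \<Rightarrow> nat list" where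
  "del i ks = take i ks @ drop (Suc i) ks"

definition ins :: "nat \<Rightarrow> nat \<Rightarrow> nat list \<Rightarrow> nat list" where
  "ins N i l = take i l @ (N - sum_list l) # drop i l"

lemma del_decomp:
  assumes "i < length ks"
  shows "sum_list ks = ks ! i + sum_list (del i ks)" "prod_list ks = ks ! i * prod_list (del i ks)"
    "length (del i ks) = length ks - 1" "set (del i ks) \<subseteq> set ks"
proof -
  have d: "ks = take i ks @ ks ! i # drop (Suc i) ks" using assms by (rule id_take_nth_drop)
  show "sum_list ks = ks ! i + sum_list (del i ks)"
    by (subst d) (simp add: del_def)
  show "prod_list ks = ks ! i * prod_list (del i ks)"
    by (subst d) (simp add: del_def)
  show "length (del i ks) = length ks - 1" using assms by (simp add: del_def)
  show "set (del i ks) \<subseteq> set ks" unfolding del_def using set_take_subset set_drop_subset by fastforce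
qed

lemma ins_del:
  assumes "i < length ks" "sum_list ks = N"
  shows "ins N i (del i ks) = ks"
proof -
  have d: "ks = take i ks @ ks ! i # drop (Suc i) ks" using assms by (simp add: id_take_nth_drop)
  have "N - sum_list (del i ks) = ks ! i" using del_decomp(1)[OF assms(1)] assms(2) by simp
  moreover have "take i (del i ks) = take i ks" "drop i (del i ks) = drop (Suc i) ks"
    using assms(1) by (simp_all add: del_def)
  ultimately show ?thesis unfolding ins_def using d by simp
qed

lemma del_ins:
  assumes "i \<le> length l"
  shows "del i (ins N i l) = l"
  using assms by (simp add: del_def ins_def)

lemma ins_props:
  assumes "i \<le> length l" "sum_list l < N"
  shows "length (ins N i l) = Suc (length l)" "sum_list (ins N i l) = N"
    "set (ins N i l) \<subseteq> insert (N - sum_list l) (set l)"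
proof -
  have l: "l = take i l @ drop i l" by simp
  show "length (ins N i l) = Suc (length l)" using assms by (simp add: ins_def)
  have "sum_list (ins N i l) = sum_list (take i l) + (N - sum_list l) + sum_list (drop i l)"
    by (simp add: ins_def)
  also have "sum_list (take i l) + sum_list (drop i l) = sum_list l"
    by (metis append_take_drop_id sum_list_append)
  ultimately show "sum_list (ins N i l) = N" using assms by simp
  show "set (ins N i l) \<subseteq> insert (N - sum_list l) (set l)"
    unfolding ins_def using set_take_subset set_drop_subset by fastforce
qed

lemma key:
  "of_nat (Suc N) * uu (Suc N) (Suc m) = of_nat (Suc m) * (multiH N m :: complex)"
proof -
  let ?A = "TT (Suc N) (Suc m)"
  let ?B = "{l::nat list. length l = m \<and> (\<forall>k\<in>set l. 0 < k) \<and> sum_list l \<le> N}"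
  have step1: "of_nat (Suc N) / of_nat (prod_list ks) = (\<Sum>i<Suc m. 1 / (of_nat (prod_list (del i ks)) :: complex))"
    if ks: "ks \<in> ?A" for ks
  proof -
    from ks have len: "length ks = Suc m" and pos: "\<forall>k\<in>set ks. 0 < k" and sm: "sum_list ks = Suc N"
      by (auto simp: TT_def)
    have "(of_nat (Suc N) :: complex) = of_nat (\<Sum>i<Suc m. ks ! i)"
      using sm len by (simp add: sum_list_sum_nth atLeast0LessThan)
    then have "(of_nat (Suc N) :: complex) / of_nat (prod_list ks) = (\<Sum>i<Suc m. of_nat (ks ! i) / of_nat (prod_list ks))"
      by (simp only: of_nat_sum sum_divide_distrib)
    also have "\<dots> = (\<Sum>i<Suc m. 1 / (of_nat (prod_list (del i ks)) :: complex))"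
    proof (rule sum.cong[OF refl])
      fix i assume "i \<in> {..<Suc m}"
      then have i: "i < length ks" using len by simp
      have "ks ! i > 0" using pos i nth_mem by blast
      then have nz: "(of_nat (ks ! i) :: complex) \<noteq> 0" by simp
      show "of_nat (ks ! i) / of_nat (prod_list ks) = 1 / (of_nat (prod_list (del i ks)) :: complex)"
        unfolding del_decomp(2)[OF i] of_nat_mult using nz by simp
    qed
    finally show ?thesis .
  qed
  have step3: "(\<Sum>ks\<in>?A. 1 / (of_nat (prod_list (del i ks)) :: complex)) = (\<Sum>l\<in>?B. 1 / of_nat (prod_list l))"
    if i: "i < Suc m" for i
  proof (rule sum.reindex_bij_witness[where i = "ins (Suc N) i" and j = "del i"])
    fix ks assume "ks \<in> ?A"
    then have len: "length ks = Suc m" and pos: "\<forall>k\<in>set ks. 0 < k" and sm: "sum_list ks = Suc N"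
      by (auto simp: TT_def)
    have il: "i < length ks" using i len by simp
    show "ins (Suc N) i (del i ks) = ks" by (rule ins_del[OF il sm])
    have "ks ! i > 0" using pos il nth_mem by blast
    then show "del i ks \<in> ?B"
      using del_decomp[OF il] len pos sm by auto
    show "1 / of_nat (prod_list (del i ks)) = 1 / (of_nat (prod_list (del i ks)) :: complex)" by simp
  next
    fix l assume "l \<in> ?B"
    then have len: "length l = m" and pos: "\<forall>k\<in>set l. 0 < k" and sm: "sum_list l \<le> N"
      by auto
    have il: "i \<le> length l" using i len by simp
    show "del i (ins (Suc N) i l) = l" by (rule del_ins[OF il])
    have sl: "sum_list l < Suc N" using sm by simp
    show "ins (Suc N) i l \<in> ?A"
      using ins_props[OF il sl] len pos sm unfolding TT_def by auto
  qed
  have "of_nat (Suc N) * uu (Suc N) (Suc m) = (\<Sum>ks\<in>?A. of_nat (Suc N) / (of_nat (prod_list ks) :: complex))"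
    unfolding uu_def sum_distrib_left by simp
  also have "\<dots> = (\<Sum>ks\<in>?A. \<Sum>i<Suc m. 1 / (of_nat (prod_list (del i ks)) :: complex))"
    by (rule sum.cong[OF refl]) (rule step1)
  also have "\<dots> = (\<Sum>i<Suc m. \<Sum>ks\<in>?A. 1 / (of_nat (prod_list (del i ks)) :: complex))"
    by (rule sum.swap)
  also have "\<dots> = (\<Sum>i<Suc m. \<Sum>l\<in>?B. 1 / (of_nat (prod_list l) :: complex))"
    by (rule sum.cong[OF refl]) (rule step3, simp)
  also have "\<dots> = of_nat (Suc m) * multiH N m"
    by (simp add: multiH_def)
  finally show ?thesis .
qed

lemma uu_stirling: "uu N m = fact m * of_nat (stirling N m) / fact N"
proof (induction m arbitrary: N)
  case 0
  then show ?case by (cases N) (simp_all add: uu_0)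
next
  case (Suc m)
  show ?case
  proof (cases N)
    case 0
    then show ?thesis by (simp add: uu_Suc_0)
  next
    case (Suc N')
    have "of_nat (Suc N') * uu (Suc N') (Suc m) = of_nat (Suc m) * (\<Sum>i\<le>N'. uu i m)"
      using key multiH_uu by simp
    also have "\<dots> = of_nat (Suc m) * fact m * (\<Sum>i\<le>N'. of_nat (stirling i m) / fact i)"
      using Suc.IH by (simp add: sum_distrib_left mult.assoc)
    also have "\<dots> = fact (Suc m) * (of_nat (stirling (Suc N') (Suc m)) / fact N')"
      unfolding stir_sum_rec fact_Suc by (simp only: mult.assoc)
    finally have "of_nat (Suc N') * uu (Suc N') (Suc m) = fact (Suc m) * (of_nat (stirling (Suc N') (Suc m)) / fact N')" .
    then have "uu (Suc N') (Suc m) = fact (Suc m) * of_nat (stirling (Suc N') (Suc m)) / (of_nat (Suc N') * fact N')"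
      by (simp add: field_simps del: of_nat_Suc)
    then show ?thesis using Suc by (simp del: of_nat_Suc)
  qed
qed



lemma multiH_diff: "(multiH (Suc k) m :: complex) - multiH k m = uu (Suc k) m"
  by (simp add: multiH_uu)

lemma inner:
  assumes "0 < m"
  shows "(\<Sum>j=m..k+1. of_nat (k choose (j - 1)) * of_int (stirling1s j m) / fact j)
       = ((multiH (k+1) m :: complex) - multiH k m) / fact m"
proof -
  have r: "((multiH (k+1) m :: complex) - multiH k m) / fact m = of_nat (stirling (Suc k) m) / fact (Suc k)"
    using multiH_diff[of k m] by (simp add: uu_stirling del: of_nat_Suc fact_Suc)
  show ?thesis
  proof (cases "m \<le> Suc k")
    case True
    have "(of_nat (stirling (Suc k) m) :: complex) / fact (Suc k)
       = (\<Sum>j=1..Suc k. of_nat (k choose (j-1)) * of_int (stirling1s j m) / fact j)"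
      by (rule stir_coeff[OF True])
    also have "\<dots> = (\<Sum>j=m..Suc k. of_nat (k choose (j-1)) * of_int (stirling1s j m) / fact j)"
      by (rule sum.mono_neutral_right) (use assms in \<open>auto simp: stirling1s_def\<close>)
    finally show ?thesis using r by simp
  next
    case False
    then show ?thesis using r by simp
  qed
qed

lemma tele:
  fixes h :: "nat \<Rightarrow> complex" and r :: complex
  shows "(\<Sum>k=0..n. (-1)^k * ((r-1) gchoose k) * (h (k+1) - h k))
       = (-1)^n * ((r-1) gchoose n) * h (n+1) - (\<Sum>k=0..n. (-1)^k * (r gchoose k) * h k)"
proof (induction n)
  case 0
  then show ?case by simp
next
  case (Suc n)
  have pas: "r gchoose (Suc n) = ((r-1) gchoose n) + ((r-1) gchoose (Suc n))"
    using gbinomial_Suc_Suc[of "r-1" n] by simp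
  show ?case
    using Suc by (simp add: pas algebra_simps)
qed

lemma uu_1: "uu (Suc k) 1 = 1 / of_nat (Suc k)"
proof -
  have s: "stirling (Suc k) 1 = fact k" using stirling_Suc_n_1 by simp
  have "uu (Suc k) 1 = fact k / fact (Suc k)"
    unfolding uu_stirling s by simp
  also have "\<dots> = 1 / of_nat (Suc k)"
    unfolding fact_Suc by (simp del: of_nat_Suc)
  finally show ?thesis .
qed

theorem theorem9:
  fixes r :: complex and m n :: nat
  assumes "0 < m" and "0 < n"
  shows "((\<Sum>k=0..n. (-1)^k * ((r - 1) gchoose k) *
            (\<Sum>j=m..k+1. of_nat (k choose (j - 1)) * of_int (stirling1s j m) / fact j))
         = (-1)^n * ((r - 1) gchoose n) * (1 / fact m) * multiH (n + 1) m
           - (1 / fact m) * (\<Sum>k=0..n. (-1)^k * (r gchoose k) * multiH k m))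
       \<and> ((\<Sum>k=0..n. (-1)^k / of_nat (k + 1) * ((r - 1) gchoose k))
         = (-1)^n * ((r - 1) gchoose n) * multiH (n + 1) 1
           - (\<Sum>k=0..n. (-1)^k * (r gchoose k) * multiH k 1))"
proof
  let ?h = "\<lambda>k. multiH k m :: complex"
  have "(\<Sum>k=0..n. (-1)^k * ((r - 1) gchoose k) *
            (\<Sum>j=m..k+1. of_nat (k choose (j - 1)) * of_int (stirling1s j m) / fact j))
      = (\<Sum>k=0..n. (1 / fact m) * ((-1)^k * ((r - 1) gchoose k) * (?h (k+1) - ?h k)))"
    unfolding inner[OF assms(1)] by (rule sum.cong[OF refl]) (simp add: divide_inverse mult_ac)
  also have "\<dots> = (1 / fact m) * (\<Sum>k=0..n. (-1)^k * ((r - 1) gchoose k) * (?h (k+1) - ?h k))"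
    by (simp only: sum_distrib_left)
  also have "\<dots> = (1 / fact m) * ((-1)^n * ((r-1) gchoose n) * ?h (n+1) - (\<Sum>k=0..n. (-1)^k * (r gchoose k) * ?h k))"
    using tele[of r ?h n] by simp
  also have "\<dots> = (-1)^n * ((r - 1) gchoose n) * (1 / fact m) * multiH (n + 1) m
           - (1 / fact m) * (\<Sum>k=0..n. (-1)^k * (r gchoose k) * multiH k m)"
    by (simp only: right_diff_distrib mult_ac)
  finally show "(\<Sum>k=0..n. (-1)^k * ((r - 1) gchoose k) *
            (\<Sum>j=m..k+1. of_nat (k choose (j - 1)) * of_int (stirling1s j m) / fact j))
         = (-1)^n * ((r - 1) gchoose n) * (1 / fact m) * multiH (n + 1) m
           - (1 / fact m) * (\<Sum>k=0..n. (-1)^k * (r gchoose k) * multiH k m)" .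
next
  let ?h = "\<lambda>k. multiH k 1 :: complex"
  have "(\<Sum>k=0..n. (-1)^k / of_nat (k + 1) * ((r - 1) gchoose k))
      = (\<Sum>k=0..n. (-1)^k * ((r - 1) gchoose k) * (?h (k+1) - ?h k))"
  proof (rule sum.cong[OF refl])
    fix k
    have "?h (k+1) - ?h k = 1 / of_nat (k+1)"
      using multiH_diff[of k 1] uu_1[of k] by simp
    then show "(-1)^k / of_nat (k + 1) * ((r - 1) gchoose k) = (-1)^k * ((r - 1) gchoose k) * (?h (k+1) - ?h k)"
      by simp
  qed
  also have "\<dots> = (-1)^n * ((r - 1) gchoose n) * multiH (n + 1) 1
           - (\<Sum>k=0..n. (-1)^k * (r gchoose k) * multiH k 1)"
    by (rule tele)
  finally show "(\<Sum>k=0..n. (-1)^k / of_nat (k + 1) * ((r - 1) gchoose k))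
         = (-1)^n * ((r - 1) gchoose n) * multiH (n + 1) 1
           - (\<Sum>k=0..n. (-1)^k * (r gchoose k) * multiH k 1)" .
qed

end
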